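(* For every $i\ge0$, the number $M_i$ of pairwise non-isomorphic diverging rooted trees of depth at most $i$ equals $T(i)$.
   Context: The tower function is $T(0)=1$, $T(i)=2^{T(i-1)}$. A rooted tree $T_v$ is a finite tree with a distinguished root $v$; isomorphisms of rooted trees must map root to root; its depth is the maximum distance from the root to a vertex. For a vertex $u$, the descendants of $u$ are the vertices whose path to the root passes through $u$ (including $u$); for a child $w$ of $u$ (a neighbor of $u$ farther from the root), the $u$-branch is the subtree spanned by the descendants of $w$, rooted at $w$. A rooted tree is diverging if for every vertex $u$ all its $u$-branches are pairwise non-isomorphic as rooted trees. *)

theory Defs
  imports Main
begin

fun tower :: "nat \<Rightarrow> nat" where
  "tower 0 = 1"
| "tower (Suc i) = 2 ^ tower i"

text \<open>The order of the list carries no meaning: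
  it is quotiented out by the rooted-tree isomorphism relation below.\<close>
datatype rtree = Node "rtree list"

inductive rtree_iso :: "rtree \<Rightarrow> rtree \<Rightarrow> bool" where
  "bij_betw \<sigma> {..<length ts} {..<length us} \<Longrightarrow>
   (\<forall>i<length ts. rtree_iso (ts ! i) (us ! \<sigma> i)) \<Longrightarrow>
   rtree_iso (Node ts) (Node us)"

fun depth :: "rtree \<Rightarrow> nat" where
  "depth (Node ts) = (if ts = [] then 0 else Suc (Max (set (map depth ts))))"

fun diverging :: "rtree \<Rightarrow> bool" where
  "diverging (Node ts) =
     ((\<forall>i<length ts. \<forall>j<length ts. i \<noteq> j \<longrightarrow> \<not> rtree_iso (ts ! i) (ts ! j))
      \<and> list_all diverging ts)"

definition M :: "nat \<Rightarrow> nat" where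
  "M i = card ({t. diverging t \<and> depth t \<le> i} // {(s, t). rtree_iso s t})"

end

theory Submission
  imports Defs "HOL-Library.Nat_Bijection"
begin

fun code :: "rtree \<Rightarrow> nat" where
  "code (Node ts) = set_encode (code ` set ts)"

lemma iso_code: "rtree_iso s t \<Longrightarrow> code s = code t"
proof (induction rule: rtree_iso.induct)
  case (1 \<sigma> ts us)
  have "code ` set ts = (\<lambda>i. code (ts ! i)) ` {..<length ts}"
    by (auto simp: in_set_conv_nth image_iff intro: nth_mem)
  also have "\<dots> = (\<lambda>i. code (us ! \<sigma> i)) ` {..<length ts}"
    using 1 by (auto intro!: image_cong)
  also have "\<dots> = (\<lambda>j. code (us ! j)) ` (\<sigma> ` {..<length ts})" by (simp add: image_image)
  also have "\<dots> = (\<lambda>j. code (us ! j)) ` {..<length us}"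
    using 1(1) by (simp add: bij_betw_def)
  also have "\<dots> = code ` set us"
    by (auto simp: in_set_conv_nth image_iff intro: nth_mem)
  finally show ?case by simp
qed

lemma iso_trans: "rtree_iso s t \<Longrightarrow> rtree_iso t u \<Longrightarrow> rtree_iso s u"
proof (induction s t arbitrary: u rule: rtree_iso.induct)
  case (1 \<sigma> ts us)
  from 1(3) obtain ws \<tau> where u: "u = Node ws" and b: "bij_betw \<tau> {..<length us} {..<length ws}"
    and r: "\<forall>i<length us. rtree_iso (us ! i) (ws ! \<tau> i)"
    by (cases rule: rtree_iso.cases) auto
  have "bij_betw (\<tau> \<circ> \<sigma>) {..<length ts} {..<length ws}"
    using 1(1) b by (rule bij_betw_trans)
  moreover have "\<forall>i<length ts. rtree_iso (ts ! i) (ws ! (\<tau> \<circ> \<sigma>) i)"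
  proof (intro allI impI)
    fix i assume i: "i < length ts"
    then have "\<sigma> i < length us" using 1(1) by (auto simp: bij_betw_def)
    then show "rtree_iso (ts ! i) (ws ! (\<tau> \<circ> \<sigma>) i)"
      using 1(2) i r by auto
  qed
  ultimately show ?case unfolding u by (rule rtree_iso.intros)
qed

lemma iso_sym: "rtree_iso s t \<Longrightarrow> rtree_iso t s"
proof (induction rule: rtree_iso.induct)
  case (1 \<sigma> ts us)
  define \<tau> where "\<tau> = inv_into {..<length ts} \<sigma>"
  have b: "bij_betw \<tau> {..<length us} {..<length ts}"
    unfolding \<tau>_def using 1(1) by (rule bij_betw_inv_into)
  have "\<forall>j<length us. rtree_iso (us ! j) (ts ! \<tau> j)"
  proof (intro allI impI)
    fix j assume j: "j < length us"
    have tj: "\<tau> j < length ts" using b j by (auto simp: bij_betw_def)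
    have "\<sigma> (\<tau> j) = j" unfolding \<tau>_def using 1(1) j
      by (auto simp: bij_betw_def intro!: f_inv_into_f)
    then show "rtree_iso (us ! j) (ts ! \<tau> j)" using 1(2) tj by metis
  qed
  then show ?case using b by (intro rtree_iso.intros)
qed

lemma div_code_iso:
  "diverging s \<Longrightarrow> diverging t \<Longrightarrow> code s = code t \<Longrightarrow> rtree_iso s t"
proof (induction s arbitrary: t)
  case (Node ts)
  obtain us where t: "t = Node us" by (cases t)
  let ?f = "\<lambda>i. code (ts ! i)" and ?g = "\<lambda>j. code (us ! j)"
  have setf: "code ` set ts = ?f ` {..<length ts}"
    by (auto simp: in_set_conv_nth image_iff intro: nth_mem)
  have setg: "code ` set us = ?g ` {..<length us}"
    by (auto simp: in_set_conv_nth image_iff intro: nth_mem)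
  have eq: "code ` set ts = code ` set us"
    using Node.prems(3) t by (simp add: set_encode_eq)
  have dts: "\<forall>x\<in>set ts. diverging x" using Node.prems(1) by (simp add: list_all_iff)
  have dus: "\<forall>x\<in>set us. diverging x" using Node.prems(2) t by (simp add: list_all_iff)
  have injf: "inj_on ?f {..<length ts}"
  proof (rule inj_onI)
    fix i j assume "i \<in> {..<length ts}" "j \<in> {..<length ts}" "?f i = ?f j"
    then show "i = j" using Node.IH[of "ts ! i" "ts ! j"] Node.prems(1) dts
      by (auto simp: nth_mem)
  qed
  have injg: "inj_on ?g {..<length us}"
  proof (rule inj_onI)
    fix i j assume "i \<in> {..<length us}" "j \<in> {..<length us}" "?g i = ?g j"
    moreover have "i \<noteq> j \<Longrightarrow> False"
    proof -
      assume ij: "i \<noteq> j"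
      have ui: "i < length us" "j < length us" using calculation by auto
      have "code (us ! i) \<in> code ` set ts" using eq ui by (simp add: nth_mem)
      then obtain x where x: "x \<in> set ts" "code x = code (us ! i)" by auto
      have "rtree_iso x (us ! i)" "rtree_iso x (us ! j)"
        using Node.IH[OF x(1)] x dts dus ui calculation by (auto simp: nth_mem)
      then have "rtree_iso (us ! i) (us ! j)" by (meson iso_sym iso_trans)
      then show False using Node.prems(2) t ui ij by auto
    qed
    ultimately show "i = j" by blast
  qed
  have bf: "bij_betw ?f {..<length ts} (code ` set ts)" using injf setf by (simp add: bij_betw_def)
  have bg: "bij_betw ?g {..<length us} (code ` set ts)" using injg setg eq by (simp add: bij_betw_def)
  define \<sigma> where "\<sigma> = inv_into {..<length us} ?g \<circ> ?f"
  have bs: "bij_betw \<sigma> {..<length ts} {..<length us}"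
    unfolding \<sigma>_def using bf bij_betw_inv_into[OF bg] by (rule bij_betw_trans)
  have "\<forall>i<length ts. rtree_iso (ts ! i) (us ! \<sigma> i)"
  proof (intro allI impI)
    fix i assume i: "i < length ts"
    have si: "\<sigma> i < length us" using bs i by (auto simp: bij_betw_def)
    have "?g (\<sigma> i) = ?f i" unfolding \<sigma>_def using i eq setf setg
      by (auto intro!: f_inv_into_f)
    then show "rtree_iso (ts ! i) (us ! \<sigma> i)"
      using Node.IH[of "ts ! i" "us ! \<sigma> i"] i si dts dus by (simp add: nth_mem)
  qed
  then show ?case unfolding t using bs by (intro rtree_iso.intros)
qed

lemma set_encode_lt: "S \<subseteq> {..<n} \<Longrightarrow> set_encode S < 2 ^ n"
proof (induction n arbitrary: S)
  case 0 then show ?case by simp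
next
  case (Suc n)
  have fin: "finite (S - {n})" using Suc.prems finite_subset by blast
  have lt: "set_encode (S - {n}) < 2 ^ n" using Suc.prems by (intro Suc.IH) auto
  show ?case
  proof (cases "n \<in> S")
    case True
    then have "S = insert n (S - {n})" by auto
    then have "set_encode S = 2 ^ n + set_encode (S - {n})"
      by (metis fin set_encode_insert Diff_iff singletonI)
    then show ?thesis using lt by simp
  next
    case False
    then have "S - {n} = S" by auto
    then have "set_encode S < 2 ^ n" using lt by simp
    moreover have "(2::nat) ^ n < 2 ^ Suc n" by simp
    ultimately show ?thesis by linarith
  qed
qed

lemma decode_lt: "m < 2 ^ n \<Longrightarrow> set_decode m \<subseteq> {..<n}"
proof
  fix k assume m: "m < 2 ^ n" and k: "k \<in> set_decode m"
  have "2 ^ k \<le> set_encode (set_decode m)"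
    unfolding set_encode_def using k by (intro member_le_sum) auto
  then have "(2::nat) ^ k < 2 ^ n" using m set_decode_inverse[of m] by linarith
  then show "k \<in> {..<n}" using power_less_imp_less_exp[of 2 k n] by simp
qed

lemma depth_child: "x \<in> set ts \<Longrightarrow> depth x < depth (Node ts)"
  by (auto simp: le_imp_less_Suc)

lemma code_bound: "diverging t \<Longrightarrow> depth t \<le> i \<Longrightarrow> code t < tower i"
proof (induction t arbitrary: i)
  case (Node ts)
  show ?case
  proof (cases "ts = []")
    case True
    have "0 < tower i" by (induction i) auto
    then show ?thesis using True by simp
  next
    case False
    then obtain k where i: "i = Suc k" using Node.prems(2) by (cases i) auto
    have "code ` set ts \<subseteq> {..<tower k}"
    proof
      fix c assume "c \<in> code ` set ts"
      then obtain x where x: "x \<in> set ts" "c = code x" by auto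
      have "depth x \<le> k" using depth_child[OF x(1)] Node.prems(2) i by simp
      moreover have "diverging x" using Node.prems(1) x(1) by (simp add: list_all_iff)
      ultimately show "c \<in> {..<tower k}" using Node.IH[OF x(1)] x(2) by auto
    qed
    then show ?thesis using i set_encode_lt by simp
  qed
qed

lemma code_surj: "m < tower i \<Longrightarrow> \<exists>t. diverging t \<and> depth t \<le> i \<and> code t = m"
proof (induction i arbitrary: m)
  case 0
  then show ?case by (intro exI[of _ "Node []"]) simp
next
  case (Suc i)
  define S where "S = set_decode m"
  have S: "S \<subseteq> {..<tower i}" using Suc.prems decode_lt unfolding S_def by simp
  define tc where "tc c = (SOME t. diverging t \<and> depth t \<le> i \<and> code t = c)" for c
  have tc: "diverging (tc c) \<and> depth (tc c) \<le> i \<and> code (tc c) = c" if "c \<in> S" for c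
  proof -
    have "\<exists>t. diverging t \<and> depth t \<le> i \<and> code t = c" using Suc.IH[of c] S that by auto
    then show ?thesis unfolding tc_def by (rule someI_ex)
  qed
  define cs where "cs = sorted_list_of_set S"
  have fS: "finite S" unfolding S_def by simp
  have dcs: "distinct cs" and scs: "set cs = S" unfolding cs_def using fS by auto
  define ts where "ts = map tc cs"
  have tcd: "\<forall>c\<in>S. diverging (tc c)" and tcp: "\<forall>c\<in>S. depth (tc c) \<le> i"
    and tcc: "\<forall>c\<in>S. code (tc c) = c" using tc by simp_all
  have "code ` set ts = (\<lambda>c. code (tc c)) ` S" unfolding ts_def using scs by (simp add: image_image)
  also have "\<dots> = (\<lambda>c. c) ` S" using tcc by (intro image_cong) auto
  finally have cts: "code ` set ts = S" by simp
  have "diverging (Node ts)"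
  proof -
    have "\<not> rtree_iso (ts ! a) (ts ! b)" if "a < length ts" "b < length ts" "a \<noteq> b" for a b
    proof
      assume "rtree_iso (ts ! a) (ts ! b)"
      then have "code (ts ! a) = code (ts ! b)" by (rule iso_code)
      moreover have "cs ! a \<in> S" "cs ! b \<in> S" using that scs unfolding ts_def by (auto simp: nth_mem)
      ultimately have "cs ! a = cs ! b" using that tcc unfolding ts_def by simp
      then show False using that dcs unfolding ts_def by (simp add: nth_eq_iff_index_eq)
    qed
    moreover have "list_all diverging ts" unfolding ts_def list_all_iff using tcd scs by simp
    ultimately show ?thesis by auto
  qed
  moreover have "depth (Node ts) \<le> Suc i"
  proof (cases "ts = []")
    case False
    have "\<forall>d\<in>set (map depth ts). d \<le> i" unfolding ts_def using tcp scs by simp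
    then show ?thesis using False by simp
  qed simp
  moreover have "code (Node ts) = m" using cts unfolding S_def by simp
  ultimately show ?case by blast
qed

lemma codes_eq: "code ` {t. diverging t \<and> depth t \<le> i} = {..<tower i}"
proof
  show "code ` {t. diverging t \<and> depth t \<le> i} \<subseteq> {..<tower i}"
    using code_bound by auto
  show "{..<tower i} \<subseteq> code ` {t. diverging t \<and> depth t \<le> i}"
  proof
    fix m assume "m \<in> {..<tower i}"
    then obtain t where "diverging t" "depth t \<le> i" "code t = m" using code_surj by blast
    then show "m \<in> code ` {t. diverging t \<and> depth t \<le> i}" by blast
  qed
qed

theorem lemma6p10:
  fixes i :: nat
  shows "M i = tower i"
proof -
  let ?A = "{t. diverging t \<and> depth t \<le> i}" and ?r = "{(s, t). rtree_iso s t}"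
  let ?F = "\<lambda>x. ?r `` {x}"
  have key: "?F x = ?F y \<longleftrightarrow> code x = code y" if "x \<in> ?A" "y \<in> ?A" for x y
  proof
    assume "?F x = ?F y"
    moreover have "y \<in> ?F y" using div_code_iso[of y y] that by simp
    ultimately have "y \<in> ?F x" by simp
    then have "rtree_iso x y" by simp
    then show "code x = code y" by (rule iso_code)
  next
    assume "code x = code y"
    then have yx: "rtree_iso y x" and xy: "rtree_iso x y"
      using div_code_iso[of y x] div_code_iso[of x y] that by simp_all
    show "?F x = ?F y"
    proof (rule set_eqI)
      fix z show "z \<in> ?F x \<longleftrightarrow> z \<in> ?F y"
        using iso_trans[OF yx, of z] iso_trans[OF xy, of z] by auto
    qed
  qed
  define h where "h c = ?F (inv_into ?A code c)" for c
  have img: "h ` (code ` ?A) = ?F ` ?A"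
  proof
    show "h ` code ` ?A \<subseteq> ?F ` ?A"
    proof
      fix X assume "X \<in> h ` code ` ?A"
      then obtain x where x: "x \<in> ?A" "X = h (code x)" by blast
      have "inv_into ?A code (code x) \<in> ?A" using x(1) by (intro inv_into_into) blast
      then show "X \<in> ?F ` ?A" unfolding x(2) h_def by (rule imageI)
    qed
    show "?F ` ?A \<subseteq> h ` code ` ?A"
    proof
      fix X assume "X \<in> ?F ` ?A"
      then obtain x where x: "x \<in> ?A" "X = ?F x" by blast
      have "inv_into ?A code (code x) \<in> ?A" using x by (intro inv_into_into) auto
      moreover have "code (inv_into ?A code (code x)) = code x" using x by (intro f_inv_into_f) auto
      ultimately have "h (code x) = X" unfolding h_def using key x by blast
      then show "X \<in> h ` code ` ?A" using x by blast
    qed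
  qed
  have inj: "inj_on h (code ` ?A)"
  proof (rule inj_onI)
    fix a b assume a: "a \<in> code ` ?A" and b: "b \<in> code ` ?A" and e: "h a = h b"
    have ia: "inv_into ?A code a \<in> ?A" "code (inv_into ?A code a) = a"
      using inv_into_into[OF a] f_inv_into_f[OF a] by simp_all
    have ib: "inv_into ?A code b \<in> ?A" "code (inv_into ?A code b) = b"
      using inv_into_into[OF b] f_inv_into_f[OF b] by simp_all
    show "a = b" using key[OF ia(1) ib(1)] e ia ib unfolding h_def by simp
  qed
  have q: "?A // ?r = ?F ` ?A" unfolding quotient_def by blast
  have "M i = card (?F ` ?A)" unfolding M_def q ..
  also have "\<dots> = card (code ` ?A)" using card_image[OF inj] img by simp
  also have "\<dots> = tower i" using codes_eq by simp
  finally show ?thesis .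
qed

end
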